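(* Let $M$ be an Orlicz function satisfying the $\Delta_2$-condition, differentiable on $(0,\infty)$ with $M'(x)>0$ for $x>0$, and such that for each $\varepsilon\in(0,1)$ the function $x\mapsto M'(\varepsilon x)/M'(x)$ is nonincreasing on $(0,\infty)$. Then the Orlicz space $L_M$ (with the Luxemburg norm) belongs to the class $\mathcal X$.
   Context: An Orlicz function is a continuous convex increasing $M:[0,\infty)\to[0,\infty)$ with $M(0)=0$, $M(u)\to\infty$ as $u\to\infty$; $M\in\Delta_2$ means $M(2u)\le CM(u)$ for all $u>0$ and some $C>0$. $L_M$ on $(0,\infty)$ has the Luxemburg norm $\|f\|_{L_M}=\inf\{\lambda>0:\int_0^\infty M(|f(s)|/\lambda)ds\le1\}$. $f^*$ denotes the nonincreasing rearrangement. A pair $(f,g)$ satisfies the NP condition if there is $t_0>0$ with $f^*(t)\ge g^*(t)$ for $t\le t_0$ and $f^*(t)\le g^*(t)$ for $t\ge t_0$. $\mathcal X$ is the class of all rearrangement invariant spaces $X$ on $(0,\infty)$ such that for every pair $(f,g)$ with $f,g\in X$ satisfying the NP condition and $\|f\|_X\ge\|g\|_X$, one has $\|f^*\chi_{(0,s)}\|_X\ge\|g^*\chi_{(0,s)}\|_X$ for all $s>0$. *)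

theory Defs
  imports "HOL-Analysis.Analysis"
begin

text \<open>Functions on (0,\<infinity>) are represented as real \<Rightarrow> real; only values on {0<..} matter.
  The underlying measure is Lebesgue measure restricted to {0<..}.\<close>

definition orlicz_function :: "(real \<Rightarrow> real) \<Rightarrow> bool" where
  "orlicz_function M \<longleftrightarrow>
     continuous_on {0..} M \<and> convex_on {0..} M \<and> mono_on {0..} M \<and>
     (\<forall>u\<ge>0. M u \<ge> 0) \<and> M 0 = 0 \<and> filterlim M at_top at_top"

definition delta2 :: "(real \<Rightarrow> real) \<Rightarrow> bool" where
  "delta2 M \<longleftrightarrow> (\<exists>C>0. \<forall>u>0. M (2 * u) \<le> C * M u)"

definition orlicz_modular :: "(real \<Rightarrow> real) \<Rightarrow> real \<Rightarrow> (real \<Rightarrow> real) \<Rightarrow> ennreal" where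
  "orlicz_modular M c f = (\<integral>\<^sup>+ s\<in>{0<..}. ennreal (M (\<bar>f s\<bar> / c)) \<partial>lebesgue)"

definition orlicz_space :: "(real \<Rightarrow> real) \<Rightarrow> (real \<Rightarrow> real) set" where
  "orlicz_space M = {f. f \<in> borel_measurable lebesgue \<and>
       (\<exists>c>0. orlicz_modular M c f < \<infinity>)}"

definition luxemburg_norm :: "(real \<Rightarrow> real) \<Rightarrow> (real \<Rightarrow> real) \<Rightarrow> real" where
  "luxemburg_norm M f = Inf {c. c > 0 \<and> orlicz_modular M c f \<le> 1}"

definition distrib_fun :: "(real \<Rightarrow> real) \<Rightarrow> real \<Rightarrow> ennreal" where
  "distrib_fun f c = emeasure lebesgue {s \<in> {0<..}. \<bar>f s\<bar> > c}"

definition rearr :: "(real \<Rightarrow> real) \<Rightarrow> real \<Rightarrow> real" where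
  "rearr f t = Inf {c. c \<ge> 0 \<and> distrib_fun f c \<le> ennreal t}"

definition rearr_trunc :: "(real \<Rightarrow> real) \<Rightarrow> real \<Rightarrow> real \<Rightarrow> real" where
  "rearr_trunc f s t = (if t < s then rearr f t else 0)"

definition NP_condition :: "(real \<Rightarrow> real) \<Rightarrow> (real \<Rightarrow> real) \<Rightarrow> bool" where
  "NP_condition f g \<longleftrightarrow> (\<exists>t0>0. \<forall>t>0.
      (t \<le> t0 \<longrightarrow> rearr f t \<ge> rearr g t) \<and> (t \<ge> t0 \<longrightarrow> rearr f t \<le> rearr g t))"

definition class_X :: "(real \<Rightarrow> real) set \<Rightarrow> ((real \<Rightarrow> real) \<Rightarrow> real) \<Rightarrow> bool" where
  "class_X X nX \<longleftrightarrow> (\<forall>f g. f \<in> X \<and> g \<in> X \<and> NP_condition f g \<and> nX f \<ge> nX g \<longrightarrow>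
       (\<forall>s>0. nX (rearr_trunc f s) \<ge> nX (rearr_trunc g s)))"

end

theory Submission imports Defs begin

lemma sigma_finite_lebesgue: "sigma_finite_measure (lebesgue :: real measure)"
  unfolding sigma_finite_measure_def
proof (rule exI[where x="range (\<lambda>n::nat. {-real n..real n})"], intro conjI)
  show "\<Union> (range (\<lambda>n::nat. {-real n..real n})) = space lebesgue"
  proof (auto)
    fix x :: real
    obtain n :: nat where "\<bar>x\<bar> \<le> real n" using real_arch_simple by blast
    then show "\<exists>n. - real n \<le> x \<and> x \<le> real n" by (intro exI[of _ n]) auto
  qed
qed auto

interpretation lebesgue_sf: sigma_finite_measure "lebesgue :: real measure" by (rule sigma_finite_lebesgue)
interpretation leb_lborel: pair_sigma_finite "lebesgue :: real measure" "lborel :: real measure" ..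

lemma layer_cake:
  fixes g :: "real \<Rightarrow> real"
  assumes g[measurable]: "g \<in> borel_measurable lebesgue" and S[measurable]: "S \<in> sets lebesgue"
  shows "(\<integral>\<^sup>+x\<in>S. ennreal (g x) \<partial>lebesgue) =
         (\<integral>\<^sup>+y\<in>{0<..}. emeasure lebesgue {x\<in>S. y < g x} \<partial>lborel)"
proof -
  define F where "F = (\<lambda>x y. indicator {(x,y). x \<in> S \<and> 0 < y \<and> y < g x} (x, y) :: ennreal)"
  have Fm: "case_prod F \<in> borel_measurable (lebesgue \<Otimes>\<^sub>M lborel)"
    unfolding F_def by measurable
  have 1: "(\<integral>\<^sup>+x\<in>S. ennreal (g x) \<partial>lebesgue) = (\<integral>\<^sup>+x. (\<integral>\<^sup>+y. F x y \<partial>lborel) \<partial>lebesgue)"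
  proof (rule nn_integral_cong)
    fix x
    show "ennreal (g x) * indicator S x = (\<integral>\<^sup>+y. F x y \<partial>lborel)"
    proof (cases "x \<in> S \<and> 0 < g x")
      case True
      have "(\<integral>\<^sup>+y. F x y \<partial>lborel) = (\<integral>\<^sup>+y. indicator {0<..<g x} y \<partial>lborel)"
        unfolding F_def using True by (auto intro!: nn_integral_cong simp: indicator_def)
      also have "\<dots> = emeasure lborel {0<..<g x}" by simp
      also have "\<dots> = ennreal (g x)" using True by simp
      finally show ?thesis using True by simp
    next
      case False
      then have "F x = (\<lambda>_. 0)"
        unfolding F_def by (auto simp: fun_eq_iff indicator_def)
      then have "(\<integral>\<^sup>+y. F x y \<partial>lborel) = 0" by simp
      then show ?thesis using False by (auto simp: indicator_def ennreal_eq_0_iff)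
    qed
  qed
  have 2: "(\<integral>\<^sup>+y\<in>{0<..}. emeasure lebesgue {x\<in>S. y < g x} \<partial>lborel) = (\<integral>\<^sup>+y. (\<integral>\<^sup>+x. F x y \<partial>lebesgue) \<partial>lborel)"
  proof (rule nn_integral_cong)
    fix y
    show "emeasure lebesgue {x\<in>S. y < g x} * indicator {0<..} y = (\<integral>\<^sup>+x. F x y \<partial>lebesgue)"
    proof (cases "0 < y")
      case True
      have m: "{x\<in>S. y < g x} \<in> sets lebesgue" by measurable
      have "(\<lambda>x. F x y) = indicator {x\<in>S. y < g x}"
        unfolding F_def using True by (auto simp: fun_eq_iff indicator_def)
      then have "(\<integral>\<^sup>+x. F x y \<partial>lebesgue) = emeasure lebesgue {x\<in>S. y < g x}"
        using nn_integral_indicator[OF m] by simp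
      then show ?thesis using True by simp
    next
      case False
      then have "(\<integral>\<^sup>+x. F x y \<partial>lebesgue) = 0"
        unfolding F_def using False by (simp add: indicator_def)
      then show ?thesis using False by (auto simp: indicator_def)
    qed
  qed
  show ?thesis unfolding 1 2 using leb_lborel.Fubini'[OF Fm] by simp
qed

lemma Ioi_leb[measurable]: "{0<..} \<in> sets (lebesgue :: real measure)" by simp
lemma ident_leb[measurable]: "(\<lambda>x::real. x) \<in> borel_measurable lebesgue"
  using id_borel_measurable_lebesgue by (simp add: id_def)
lemma ind_Ioi_meas: "(indicator {0<..} :: real \<Rightarrow> ennreal) \<in> borel_measurable (lebesgue :: real measure)"
  by (intro borel_measurable_indicator sets_completionI_sets) simp
lemma Iio_leb[measurable]: "{..<s} \<in> sets (lebesgue :: real measure)" by simp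

lemma ennreal_cancel:
  fixes X Y P Q :: ennreal
  assumes h: "X + ennreal k * Q \<le> Y + ennreal k * P" and P: "P \<le> 1" and Q: "1 < Q"
    and Y: "Y < \<infinity>" and Qf: "Q < \<infinity>" and k: "k > 0"
  shows "X < Y"
proof -
  obtain p where p: "P = ennreal p" "p \<ge> 0" using P by (cases P) (auto simp: top_unique)
  obtain q where q: "Q = ennreal q" "q \<ge> 0" using Qf by (cases Q) auto
  obtain y where y: "Y = ennreal y" "y \<ge> 0" using Y by (cases Y) auto
  have "Y + ennreal k * P < \<infinity>" using y p k by (simp add: ennreal_mult_less_top)
  then have "X + ennreal k * Q < \<infinity>" using h by (rule le_less_trans[rotated])
  then have "X < \<infinity>" by (simp add: top_unique)
  then obtain x where x: "X = ennreal x" "x \<ge> 0" by (cases X) auto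
  have "ennreal (x + k*q) \<le> ennreal (y + k*p)"
    using h x y p q k by (simp add: ennreal_mult[symmetric] ennreal_plus[symmetric] del: ennreal_plus)
  then have "x + k*q \<le> y + k*p" using y p k by (subst (asm) ennreal_le_iff) auto
  moreover have "p \<le> 1" "1 < q" using P Q p q by auto
  ultimately have "x < y" using k by (smt (verit) mult_strict_left_mono)
  then show ?thesis using x y by (simp add: ennreal_less_iff)
qed

locale orlM =
  fixes M :: "real \<Rightarrow> real"
  assumes orl: "orlicz_function M" and d2: "delta2 M"
    and diff: "\<forall>x>0. M differentiable (at x)" and dpos: "\<forall>x>0. deriv M x > 0"
begin

lemma Mcont: "continuous_on {0..} M" and Mconv: "convex_on {0..} M" and Mmono: "mono_on {0..} M"
  and M0: "M 0 = 0" and Mlim: "filterlim M at_top at_top"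
  using orl by (auto simp: orlicz_function_def)

lemma Mder: "x > 0 \<Longrightarrow> (M has_real_derivative deriv M x) (at x)"
  using diff DERIV_deriv_iff_real_differentiable by blast

lemma Mle: "0 \<le> x \<Longrightarrow> x \<le> y \<Longrightarrow> M x \<le> M y"
  using Mmono by (auto simp: mono_on_def)

lemma Mnn: "0 \<le> x \<Longrightarrow> 0 \<le> M x"
  using Mle[of 0 x] M0 by simp

lemma Mstrict_pos: assumes "0 < x" "x < y" shows "M x < M y"
proof -
  have "\<And>z. x \<le> z \<Longrightarrow> z \<le> y \<Longrightarrow> \<exists>D. (M has_real_derivative D) (at z) \<and> 0 < D"
    using Mder dpos assms by (meson less_le_trans)
  then show ?thesis using DERIV_pos_imp_increasing[of x y M] assms by blast
qed

lemma Mstrict: assumes "0 \<le> x" "x < y" shows "M x < M y"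
proof (cases "x = 0")
  case True
  then have "M x \<le> M (y/2)" using assms by (intro Mle) auto
  also have "\<dots> < M y" using assms by (intro Mstrict_pos) auto
  finally show ?thesis .
qed (use assms Mstrict_pos in auto)

lemma Mpos: "0 < x \<Longrightarrow> 0 < M x"
  using Mstrict[of 0 x] M0 by simp

lemma Mlt_iff: "0 \<le> x \<Longrightarrow> 0 \<le> y \<Longrightarrow> M x < M y \<longleftrightarrow> x < y"
  using Mstrict Mle by (metis not_less)

lemma Mle_iff: "0 \<le> x \<Longrightarrow> 0 \<le> y \<Longrightarrow> M x \<le> M y \<longleftrightarrow> x \<le> y"
  using Mstrict Mle by (metis not_less)

lemma Mconvex: "0 \<le> t \<Longrightarrow> t \<le> 1 \<Longrightarrow> 0 \<le> x \<Longrightarrow> 0 \<le> y \<Longrightarrow> M ((1-t)*x + t*y) \<le> (1-t) * M x + t * M y"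
proof -
  assume a: "0 \<le> t" "t \<le> 1" "0 \<le> x" "0 \<le> y"
  have "M ((1-t) *\<^sub>R x + t *\<^sub>R y) \<le> (1-t) * M x + t * M y" by (rule convex_onD[OF Mconv]) (use a in auto)
  then show ?thesis by simp
qed

lemma Mhalf: "0 \<le> x \<Longrightarrow> 2 * M (x/2) \<le> M x"
  using Mconvex[of "1/2" x 0] M0 by simp

lemma d2C: obtains C where "C \<ge> 1" "\<And>x. 0 \<le> x \<Longrightarrow> M (2*x) \<le> C * M x"
proof -
  obtain C where C: "C > 0" "\<forall>u>0. M (2*u) \<le> C * M u" using d2 by (auto simp: delta2_def)
  show ?thesis
  proof (rule that[of "C+1"])
    fix x :: real assume x: "0 \<le> x"
    show "M (2*x) \<le> (C+1) * M x"
    proof (cases "x = 0")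
      case True then show ?thesis using M0 by simp
    next
      case False
      then have "M (2*x) \<le> C * M x" using C x by auto
      also have "\<dots> \<le> (C+1) * M x" using Mnn[OF x] by (simp add: algebra_simps)
      finally show ?thesis .
    qed
  qed (use C in simp)
qed

definition "CC = (SOME C. C \<ge> 1 \<and> (\<forall>x. 0 \<le> x \<longrightarrow> M (2*x) \<le> C * M x))"

lemma CC: "CC \<ge> 1" "0 \<le> x \<Longrightarrow> M (2*x) \<le> CC * M x"
proof -
  have "\<exists>C. C \<ge> 1 \<and> (\<forall>x. 0 \<le> x \<longrightarrow> M (2*x) \<le> C * M x)" using d2C by metis
  from someI_ex[OF this] show "CC \<ge> 1" "0 \<le> x \<Longrightarrow> M (2*x) \<le> CC * M x" unfolding CC_def by auto
qed

lemma Mgrow: assumes "0 \<le> th" "th \<le> 1" "0 \<le> x" shows "M ((1+th)*x) \<le> (1 + th*(CC-1)) * M x"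
proof -
  have "M ((1+th)*x) = M ((1-th)*x + th*(2*x))" by (simp add: algebra_simps)
  also have "\<dots> \<le> (1-th) * M x + th * M (2*x)" using assms by (intro Mconvex) auto
  also have "\<dots> \<le> (1-th) * M x + th * (CC * M x)" using assms CC(2)[of x] by (intro add_left_mono mult_left_mono) auto
  also have "\<dots> = (1 + th*(CC-1)) * M x" by (simp add: algebra_simps)
  finally show ?thesis .
qed

lemma Msurj: assumes "y > 0" obtains a where "a > 0" "M a = y"
proof -
  obtain b where b: "M b > y" "b \<ge> 0"
  proof -
    have "eventually (\<lambda>x. M x > y) at_top" using Mlim by (simp add: filterlim_at_top_dense)
    then obtain N where N: "\<forall>x\<ge>N. M x > y" by (auto simp: eventually_at_top_linorder)
    show ?thesis using N that[of "max N 0"] by auto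
  qed
  have "continuous_on {0..b} M" using Mcont by (rule continuous_on_subset) auto
  then obtain a where a: "0 \<le> a" "a \<le> b" "M a = y" using IVT'[of M 0 y b] b M0 assms by auto
  then have "a \<noteq> 0" using M0 assms by auto
  with a show ?thesis using that[of a] by auto
qed

lemma Mz_cont: "continuous_on UNIV (\<lambda>z. M (max z 0))"
  by (rule continuous_on_compose2[OF Mcont]) (auto intro!: continuous_intros)

lemma Mmeas[measurable]:
  fixes h :: "real \<Rightarrow> real"
  assumes "h \<in> borel_measurable lebesgue" "c > 0"
  shows "(\<lambda>x. M (\<bar>h x\<bar> / c)) \<in> borel_measurable lebesgue"
proof -
  have "(\<lambda>x. M (max (\<bar>h x\<bar> / c) 0)) \<in> borel_measurable lebesgue"
    by (rule borel_measurable_continuous_on[OF Mz_cont]) (use assms in measurable)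
  moreover have "\<And>x. max (\<bar>h x\<bar> / c) 0 = \<bar>h x\<bar> / c" using assms by auto
  ultimately show ?thesis by simp
qed


lemma integrand_meas[measurable]:
  fixes h :: "real \<Rightarrow> real"
  assumes "h \<in> borel_measurable lebesgue" "c > 0"
  shows "(\<lambda>x. ennreal (M (\<bar>h x\<bar> / c)) * indicator {0<..} x) \<in> borel_measurable lebesgue"
proof -
  have 1: "(\<lambda>x. ennreal (M (\<bar>h x\<bar> / c))) \<in> borel_measurable lebesgue"
    using Mmeas[OF assms] by measurable
  note 2 = ind_Ioi_meas
  show ?thesis by (intro borel_measurable_times_ennreal 1 2)
qed

abbreviation "rho c h \<equiv> orlicz_modular M c h"
abbreviation "NN h \<equiv> luxemburg_norm M h"

definition "good h \<longleftrightarrow> h \<in> borel_measurable lebesgue \<and> (\<forall>c>0. rho c h < \<infinity>)"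

lemma rho_anti: assumes "0 < c" "c \<le> c'" shows "rho c' h \<le> rho c h"
  unfolding orlicz_modular_def
proof (intro nn_integral_mono mult_right_mono ennreal_leI)
  fix x
  have "\<bar>h x\<bar> / c' \<le> \<bar>h x\<bar> / c" using assms by (intro divide_left_mono) auto
  then show "M (\<bar>h x\<bar> / c') \<le> M (\<bar>h x\<bar> / c)" using assms by (intro Mle) auto
qed simp

lemma rho_fun_mono: assumes "0 < c" "\<And>x. x > 0 \<Longrightarrow> \<bar>h1 x\<bar> \<le> \<bar>h2 x\<bar>" shows "rho c h1 \<le> rho c h2"
  unfolding orlicz_modular_def
proof (intro nn_integral_mono)
  fix x
  show "ennreal (M (\<bar>h1 x\<bar> / c)) * indicator {0<..} x \<le> ennreal (M (\<bar>h2 x\<bar> / c)) * indicator {0<..} x"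
  proof (cases "x > 0")
    case True
    then have "M (\<bar>h1 x\<bar> / c) \<le> M (\<bar>h2 x\<bar> / c)" using assms by (intro Mle divide_right_mono) auto
    then show ?thesis by (intro mult_right_mono ennreal_leI) auto
  qed simp
qed

lemma rho_cong: assumes "\<And>x. x > 0 \<Longrightarrow> \<bar>h1 x\<bar> = \<bar>h2 x\<bar>" shows "rho c h1 = rho c h2"
  unfolding orlicz_modular_def
  by (intro nn_integral_cong) (auto simp: assms indicator_def)

lemma rho_mult:
  assumes h: "h \<in> borel_measurable lebesgue" and c: "c > 0" and a: "a > 0" and K: "K \<ge> 0"
    and MK: "\<And>z. 0 \<le> z \<Longrightarrow> M (a * z) \<le> K * M z"
  shows "rho (c/a) h \<le> ennreal K * rho c h"
proof -
  have "rho (c/a) h \<le> (\<integral>\<^sup>+x. ennreal K * (ennreal (M (\<bar>h x\<bar> / c)) * indicator {0<..} x) \<partial>lebesgue)"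
    unfolding orlicz_modular_def
  proof (intro nn_integral_mono)
    fix x
    have "M (\<bar>h x\<bar> / (c/a)) = M (a * (\<bar>h x\<bar> / c))" using a c by (simp add: field_simps)
    also have "\<dots> \<le> K * M (\<bar>h x\<bar> / c)" using c by (intro MK) auto
    finally have "ennreal (M (\<bar>h x\<bar> / (c/a))) \<le> ennreal (K * M (\<bar>h x\<bar> / c))"
      by (rule ennreal_leI)
    also have "\<dots> = ennreal K * ennreal (M (\<bar>h x\<bar> / c))"
      using K c by (intro ennreal_mult Mnn) auto
    finally have "ennreal (M (\<bar>h x\<bar> / (c/a))) \<le> ennreal K * ennreal (M (\<bar>h x\<bar> / c))" .
    then show "ennreal (M (\<bar>h x\<bar> / (c/a))) * indicator {0<..} x \<le> ennreal K * (ennreal (M (\<bar>h x\<bar> / c)) * indicator {0<..} x)"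
      by (auto simp: indicator_def)
  qed
  also have "\<dots> = ennreal K * rho c h"
    unfolding orlicz_modular_def using h c by (intro nn_integral_cmult integrand_meas)
  finally show ?thesis .
qed

lemma rho_d2: "h \<in> borel_measurable lebesgue \<Longrightarrow> c > 0 \<Longrightarrow> rho (c/2) h \<le> ennreal CC * rho c h"
  by (rule rho_mult) (use CC in auto)

lemma rho_halfc: assumes "h \<in> borel_measurable lebesgue" "c > 0" shows "rho (2*c) h \<le> ennreal (1/2) * rho c h"
proof -
  have "rho (c/(1/2)) h \<le> ennreal (1/2) * rho c h"
    using assms by (intro rho_mult) (use Mhalf in \<open>auto simp: field_simps\<close>)
  then show ?thesis by (simp add: mult.commute)
qed

lemma rho_grow: assumes "h \<in> borel_measurable lebesgue" "c > 0" "0 \<le> th" "th \<le> 1"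
  shows "rho (c/(1+th)) h \<le> ennreal (1 + th*(CC-1)) * rho c h"
  using assms CC(1) by (intro rho_mult Mgrow) auto

lemma rho_fin_ext: assumes h: "h \<in> borel_measurable lebesgue" and c0: "c0 > 0" "rho c0 h < \<infinity>" and c: "c > 0"
  shows "rho c h < \<infinity>"
proof -
  have ind: "rho (c0 / 2^k) h \<le> ennreal (CC^k) * rho c0 h" for k
  proof (induction k)
    case 0 then show ?case by simp
  next
    case (Suc k)
    have "rho (c0 / 2^Suc k) h = rho ((c0/2^k)/2) h" by (simp add: field_simps)
    also have "\<dots> \<le> ennreal CC * rho (c0/2^k) h" using h c0 by (intro rho_d2) auto
    also have "\<dots> \<le> ennreal CC * (ennreal (CC^k) * rho c0 h)" using Suc by (intro mult_left_mono) auto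
    also have "\<dots> = (ennreal CC * ennreal (CC^k)) * rho c0 h" by (simp only: mult.assoc)
    also have "ennreal CC * ennreal (CC^k) = ennreal (CC^Suc k)"
      using CC(1) by (subst ennreal_mult[symmetric]) auto
    finally show ?case .
  qed
  obtain k where k: "c0 / c < 2^k" using real_arch_pow[of 2 "c0/c"] by auto
  then have "c0 / 2^k < c" using c by (simp add: field_simps)
  then have "rho c h \<le> rho (c0 / 2^k) h" using c0 by (intro rho_anti) auto
  also have "\<dots> \<le> ennreal (CC^k) * rho c0 h" by (rule ind)
  also have "\<dots> < \<infinity>" using c0 by (simp add: ennreal_mult_less_top)
  finally show ?thesis .
qed

lemma rho_small: assumes h: "h \<in> borel_measurable lebesgue" and c0: "c0 > 0" "rho c0 h < \<infinity>"
  shows "\<exists>c>0. rho c h \<le> 1"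
proof -
  have ind: "rho (c0 * 2^k) h \<le> ennreal ((1/2)^k) * rho c0 h" for k
  proof (induction k)
    case 0 then show ?case by simp
  next
    case (Suc k)
    have "rho (c0 * 2^Suc k) h = rho (2*(c0*2^k)) h" by (simp add: field_simps)
    also have "\<dots> \<le> ennreal (1/2) * rho (c0*2^k) h" using h c0 by (intro rho_halfc) auto
    also have "\<dots> \<le> ennreal (1/2) * (ennreal ((1/2)^k) * rho c0 h)" using Suc by (intro mult_left_mono) auto
    also have "\<dots> = (ennreal (1/2) * ennreal ((1/2)^k)) * rho c0 h" by (simp only: mult.assoc)
    also have "ennreal (1/2) * ennreal ((1/2)^k) = ennreal ((1/2)^Suc k)"
      by (subst ennreal_mult[symmetric]) auto
    finally show ?case .
  qed
  define r where "r = enn2real (rho c0 h)"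
  have r: "rho c0 h = ennreal r" "r \<ge> 0" using c0 unfolding r_def by (auto simp: less_top)
  obtain k where k: "r < 2^k" using real_arch_pow[of 2 r] by auto
  have "ennreal ((1/2)^k) * rho c0 h = ennreal ((1/2)^k * r)" using r by (simp add: ennreal_mult)
  also have "\<dots> \<le> 1"
  proof -
    have "(1/2)^k * r \<le> 1" using k by (simp add: power_divide field_simps)
    then show ?thesis by simp
  qed
  finally show ?thesis using ind[of k] c0 by (intro exI[of _ "c0 * 2^k"]) auto
qed

lemma space_good: "h \<in> orlicz_space M \<Longrightarrow> good h"
  unfolding orlicz_space_def good_def using rho_fin_ext by blast

definition "SS h = {c. c > 0 \<and> rho c h \<le> 1}"

lemma NN_def': "NN h = Inf (SS h)" unfolding luxemburg_norm_def SS_def ..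

lemma SS_ne: assumes "good h" shows "SS h \<noteq> {}"
  using rho_small[of h 1] assms by (auto simp: good_def SS_def)

lemma SS_bdd: "bdd_below (SS h)" unfolding SS_def by (auto intro: bdd_belowI[of _ 0])

lemma N_nonneg: "good h \<Longrightarrow> 0 \<le> NN h"
  unfolding NN_def' using SS_ne by (intro cInf_greatest) (auto simp: SS_def)

lemma N_le: "c > 0 \<Longrightarrow> rho c h \<le> 1 \<Longrightarrow> NN h \<le> c"
  unfolding NN_def' by (intro cInf_lower SS_bdd) (auto simp: SS_def)

lemma N_gt: assumes "good h" "NN h < c" shows "rho c h \<le> 1"
proof -
  obtain x where "x \<in> SS h" "x < c" using cInf_lessD[OF SS_ne[OF assms(1)]] assms(2) unfolding NN_def' by blast
  then show ?thesis using rho_anti[of x c h] unfolding SS_def by auto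
qed

lemma N_lt: "0 < c \<Longrightarrow> c < NN h \<Longrightarrow> 1 < rho c h"
  using N_le[of c h] by (meson not_le)

lemma N_at: assumes g: "good h" and n: "0 < NN h" shows "rho (NN h) h \<le> 1"
proof (rule ccontr)
  let ?n = "NN h"
  assume "\<not> ?thesis"
  then have gt: "1 < rho ?n h" by simp
  define r where "r = enn2real (rho ?n h)"
  have r: "rho ?n h = ennreal r" "r \<ge> 0" using g n unfolding r_def good_def by (auto simp: less_top)
  then have r1: "r > 1" using gt by simp
  define th where "th = min 1 ((r-1)/(2*CC))"
  have th: "0 < th" "th \<le> 1" using r1 CC(1) unfolding th_def by auto
  have "th*(CC-1) \<le> th * CC" using th by auto
  also have "\<dots> \<le> (r-1)/2" using CC(1) unfolding th_def by (auto simp: min_def field_simps)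
  finally have thb: "1 + th*(CC-1) < r" using r1 by simp
  have "?n < ?n * (1+th)" using n th by simp
  then have le1: "rho (?n * (1+th)) h \<le> 1" using g by (intro N_gt) auto
  have "rho ?n h = rho ((?n*(1+th))/(1+th)) h" using th by simp
  also have "\<dots> \<le> ennreal (1 + th*(CC-1)) * rho (?n*(1+th)) h"
    using g n th by (intro rho_grow) (auto simp: good_def)
  also have "\<dots> \<le> ennreal (1 + th*(CC-1)) * 1" using le1 by (intro mult_left_mono) auto
  finally have "ennreal r \<le> ennreal (1 + th*(CC-1))" using r by simp
  then have "r \<le> 1 + th*(CC-1)" using th CC(1) by (subst (asm) ennreal_le_iff) auto
  then show False using thb by simp
qed

lemma N_left: assumes g: "good h" and c: "0 < c" and lt: "rho c h < 1" shows "NN h < c"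
proof -
  define r where "r = enn2real (rho c h)"
  have r: "rho c h = ennreal r" "r \<ge> 0" using g c unfolding r_def good_def by (auto simp: less_top)
  then have r1: "r < 1" using lt by simp
  define th where "th = min 1 ((1-r)/(CC*(r+1)))"
  have "0 < (1-r)/(CC*(r+1))" using r1 r CC(1) by (intro divide_pos_pos mult_pos_pos) auto
  then have th: "0 < th" "th \<le> 1" unfolding th_def by auto
  have "th * CC * r \<le> ((1-r)/(CC*(r+1))) * CC * r" using th r CC(1) unfolding th_def
    by (intro mult_right_mono) auto
  also have "\<dots> = (1-r) * (r/(r+1))"
  proof -
    have "CC \<noteq> 0" "r + 1 \<noteq> 0" using CC(1) r by auto
    then show ?thesis by (simp add: divide_simps)
  qed
  also have "\<dots> \<le> (1-r) * 1" using r r1 by (intro mult_left_mono) auto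
  finally have k0: "th * CC * r \<le> (1-r) * 1" .
  have k1: "0 \<le> th * r" using th r by simp
  have k2: "(1 + th*(CC-1)) * r = r + th * CC * r - th * r" by (simp add: algebra_simps)
  have k0': "th * CC * r \<le> 1 - r" using k0 by simp
  have key: "(1 + th*(CC-1)) * r \<le> 1" using k0' k1 k2 by linarith
  have "rho (c/(1+th)) h \<le> ennreal (1 + th*(CC-1)) * rho c h"
    using g c th by (intro rho_grow) (auto simp: good_def)
  also have "\<dots> = ennreal ((1 + th*(CC-1)) * r)" using r th CC(1) by (simp add: ennreal_mult)
  also have "\<dots> \<le> 1" using key by (simp add: ennreal_leI)
  finally have "NN h \<le> c/(1+th)" using c th by (intro N_le) auto
  also have "\<dots> < c" using c th by (simp add: field_simps)
  finally show ?thesis .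
qed

lemma N_mono: assumes "good h1" "good h2" "\<And>c. c > 0 \<Longrightarrow> rho c h1 \<le> rho c h2" shows "NN h1 \<le> NN h2"
  unfolding NN_def'[of h2]
proof (rule cInf_greatest[OF SS_ne[OF assms(2)]])
  fix c assume "c \<in> SS h2"
  then show "NN h1 \<le> c" using assms(3)[of c] by (intro N_le) (auto simp: SS_def)
qed

lemma N_cong: assumes "\<And>c. c > 0 \<Longrightarrow> rho c h1 = rho c h2" shows "NN h1 = NN h2"
proof -
  have "SS h1 = SS h2" using assms unfolding SS_def by auto
  then show ?thesis unfolding NN_def' by simp
qed


lemma equi:
  fixes h1 h2 :: "real \<Rightarrow> real"
  assumes h1: "h1 \<in> borel_measurable lebesgue" and h2: "h2 \<in> borel_measurable lebesgue" and c: "c > 0"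
    and eq: "\<And>l. l > 0 \<Longrightarrow> emeasure lebesgue {x\<in>{0<..}. l < \<bar>h1 x\<bar>} = emeasure lebesgue {x\<in>{0<..}. l < \<bar>h2 x\<bar>}"
  shows "rho c h1 = rho c h2"
proof -
  have lc: "rho c h = (\<integral>\<^sup>+y\<in>{0<..}. emeasure lebesgue {x\<in>{0<..}. y < M (\<bar>h x\<bar> / c)} \<partial>lborel)"
    if h: "h \<in> borel_measurable lebesgue" for h :: "real \<Rightarrow> real"
    unfolding orlicz_modular_def by (rule layer_cake) (use h c Mmeas in auto)
  have lev: "{x\<in>{0<..}. y < M (\<bar>h x\<bar> / c)} = {x\<in>{0<..}. c * a < \<bar>h x\<bar>}"
    if "a > 0" "M a = y" for y a and h :: "real \<Rightarrow> real"
  proof -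
    have "y < M (\<bar>h x\<bar> / c) \<longleftrightarrow> c * a < \<bar>h x\<bar>" for x
    proof -
      have "y < M (\<bar>h x\<bar> / c) \<longleftrightarrow> a < \<bar>h x\<bar> / c" using that c by (subst Mlt_iff[symmetric]) auto
      also have "\<dots> \<longleftrightarrow> c * a < \<bar>h x\<bar>" using c by (simp add: field_simps)
      finally show ?thesis .
    qed
    then show ?thesis by auto
  qed
  show ?thesis unfolding lc[OF h1] lc[OF h2]
  proof (intro nn_integral_cong)
    fix y :: real
    show "emeasure lebesgue {x\<in>{0<..}. y < M (\<bar>h1 x\<bar> / c)} * indicator {0<..} y =
          emeasure lebesgue {x\<in>{0<..}. y < M (\<bar>h2 x\<bar> / c)} * indicator {0<..} y"
    proof (cases "y > 0")
      case True
      obtain a where a: "a > 0" "M a = y" using Msurj[OF True] by blast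
      show ?thesis unfolding lev[OF a, of h1] lev[OF a, of h2] using eq[of "c*a"] a c by simp
    qed simp
  qed
qed

abbreviation "dd f l \<equiv> distrib_fun f l"

lemma d_sets[measurable]:
  fixes f :: "real \<Rightarrow> real"
  assumes "f \<in> borel_measurable lebesgue"
  shows "{s\<in>{0<..}. l < \<bar>f s\<bar>} \<in> sets lebesgue"
  using assms by measurable

lemma dfin: assumes g: "good f" and l: "l > 0" shows "dd f l < \<infinity>"
proof -
  have fm: "f \<in> borel_measurable lebesgue" using g by (simp add: good_def)
  let ?A = "{s\<in>{0<..}. l < \<bar>f s\<bar>}"
  have "ennreal (M l) * dd f l = (\<integral>\<^sup>+x\<in>?A. ennreal (M l) \<partial>lebesgue)"
    unfolding distrib_fun_def by (rule nn_integral_cmult_indicator[symmetric]) (use fm in measurable)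
  also have "\<dots> \<le> rho 1 f"
    unfolding orlicz_modular_def
  proof (intro nn_integral_mono)
    fix x
    show "ennreal (M l) * indicator ?A x \<le> ennreal (M (\<bar>f x\<bar> / 1)) * indicator {0<..} x"
    proof (cases "x \<in> ?A")
      case True
      then have "M l \<le> M (\<bar>f x\<bar> / 1)" using l by (intro Mle) auto
      then show ?thesis using True by (auto simp: indicator_def ennreal_leI)
    qed (simp add: indicator_def)
  qed
  also have "\<dots> < \<infinity>" using g by (simp add: good_def)
  finally have "ennreal (M l) * dd f l < \<infinity>" .
  moreover have "M l > 0" using Mpos l by auto
  ultimately show ?thesis by (auto simp: ennreal_mult_less_top)
qed

lemma d_anti: assumes "f \<in> borel_measurable lebesgue" "l \<le> l'" shows "dd f l' \<le> dd f l"
  unfolding distrib_fun_def by (rule emeasure_mono) (use d_sets[OF assms(1), of l] assms in auto)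

lemma d_sup: fixes f :: "real \<Rightarrow> real" assumes fm: "f \<in> borel_measurable lebesgue"
  shows "dd f l = (SUP n. dd f (l + 1 / real (Suc n)))"
proof -
  define A where "A n = {s\<in>{0<..}. l + 1 / real (Suc n) < \<bar>f s\<bar>}" for n
  have r: "range A \<subseteq> sets lebesgue"
  proof safe
    fix n show "A n \<in> sets lebesgue" unfolding A_def using fm by measurable
  qed
  have i: "incseq A"
  proof (rule incseq_SucI)
    fix n
    have "1 / real (Suc (Suc n)) \<le> 1 / real (Suc n)" by (simp add: frac_le)
    then show "A n \<subseteq> A (Suc n)" unfolding A_def by auto
  qed
  have U: "\<Union> (range A) = {s\<in>{0<..}. l < \<bar>f s\<bar>}"
  proof (rule set_eqI, rule iffI)
    fix x assume "x \<in> \<Union> (range A)"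
    then obtain n where "x \<in> A n" by blast
    then have xa: "0 < x" "l + 1 / real (Suc n) < \<bar>f x\<bar>" unfolding A_def by auto
    have "0 < 1 / real (Suc n)" by simp
    then have "l < \<bar>f x\<bar>" using xa(2) by linarith
    then show "x \<in> {s\<in>{0<..}. l < \<bar>f s\<bar>}" using xa(1) by simp
  next
    fix x assume x: "x \<in> {s\<in>{0<..}. l < \<bar>f s\<bar>}"
    then have "0 < \<bar>f x\<bar> - l" by simp
    then obtain n where n: "inverse (real (Suc n)) < \<bar>f x\<bar> - l" using reals_Archimedean by blast
    then have "x \<in> A n" using x unfolding A_def by (auto simp: field_simps)
    then show "x \<in> \<Union> (range A)" by blast
  qed
  have "dd f l = emeasure lebesgue (\<Union> (range A))" unfolding distrib_fun_def U ..
  also have "\<dots> = (SUP n. emeasure lebesgue (A n))" using SUP_emeasure_incseq[OF r i] by simp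
  also have "\<dots> = (SUP n. dd f (l + 1 / real (Suc n)))" unfolding A_def distrib_fun_def ..
  finally show ?thesis .
qed

lemma d_rc: assumes fm: "f \<in> borel_measurable lebesgue" and lt: "ennreal t < dd f l"
  shows "\<exists>e>0. ennreal t < dd f (l + e)"
proof -
  have "ennreal t < (SUP n. dd f (l + 1 / real (Suc n)))" using lt d_sup[OF fm, of l] by simp
  then obtain n where "ennreal t < dd f (l + 1 / real (Suc n))" by (auto simp: less_SUP_iff)
  then show ?thesis by (intro exI[of _ "1 / real (Suc n)"]) auto
qed

lemma d_small: assumes g: "good f" and t: "t > 0" shows "\<exists>c\<ge>0. dd f c \<le> ennreal t"
proof -
  have fm: "f \<in> borel_measurable lebesgue" using g by (simp add: good_def)
  define A where "A n = {s\<in>{0<..}. real (Suc n) < \<bar>f s\<bar>}" for n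
  have s1: "\<And>i. A i \<in> sets lebesgue" unfolding A_def by (rule d_sets[OF fm])
  have s2: "antimono_on UNIV A"
  proof (rule monotone_onI)
    fix m n :: nat assume mn: "m \<le> n"
    have "real (Suc m) \<le> real (Suc n)" using mn by simp
    then show "A n \<le> A m" unfolding A_def by (auto intro: le_less_trans)
  qed
  have s3: "\<exists>i. emeasure lebesgue (A i) \<noteq> \<infinity>" using dfin[OF g, of 1] unfolding A_def distrib_fun_def
    by (intro exI[of _ 0]) auto
  have "(INF n. emeasure lebesgue (A n)) = emeasure lebesgue (\<Inter> (range A))"
    by (rule INF_emeasure_decseq'[OF s1 s2 s3])
  moreover have "\<Inter> (range A) = {}"
  proof (rule equals0I)
    fix x :: real assume x: "x \<in> \<Inter> (range A)"
    obtain n :: nat where n: "\<bar>f x\<bar> < real n" using reals_Archimedean2[of "\<bar>f x\<bar>"] by blast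
    have "x \<in> A n" using x by blast
    then show False using n unfolding A_def by simp
  qed
  ultimately have "(INF n. dd f (real (Suc n))) = 0" unfolding distrib_fun_def A_def by simp
  then have "(INF n. dd f (real (Suc n))) < ennreal t" using t by simp
  then obtain n where "dd f (real (Suc n)) < ennreal t" by (auto simp: INF_less_iff)
  then show ?thesis by (intro exI[of _ "real (Suc n)"]) auto
qed

definition "RS f t = {c. c \<ge> 0 \<and> dd f c \<le> ennreal t}"

lemma rearr_def': "rearr f t = Inf (RS f t)" unfolding rearr_def RS_def ..

lemma RS_ne: "good f \<Longrightarrow> t > 0 \<Longrightarrow> RS f t \<noteq> {}"
  using d_small unfolding RS_def by blast

lemma RS_bdd: "bdd_below (RS f t)" unfolding RS_def by (auto intro: bdd_belowI[of _ 0])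

lemma rearr_nn: "good f \<Longrightarrow> t > 0 \<Longrightarrow> 0 \<le> rearr f t"
  unfolding rearr_def' using RS_ne by (intro cInf_greatest) (auto simp: RS_def)

lemma rearr_anti: assumes "good f" "0 < t" "t \<le> t'" shows "rearr f t' \<le> rearr f t"
  unfolding rearr_def'
proof (rule cInf_superset_mono[OF RS_ne[OF assms(1,2)] RS_bdd])
  show "RS f t \<subseteq> RS f t'" unfolding RS_def using assms(2,3)
    by (auto intro: order_trans ennreal_leI)
qed

lemma rearr_gt: assumes g: "good f" and l: "l > 0" and t: "t > 0"
  shows "l < rearr f t \<longleftrightarrow> ennreal t < dd f l"
proof
  assume "ennreal t < dd f l"
  then obtain e where e: "e > 0" "ennreal t < dd f (l + e)" using d_rc[of f t l] g by (auto simp: good_def)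
  have "l + e \<le> rearr f t"
    unfolding rearr_def'
  proof (rule cInf_greatest[OF RS_ne[OF g t]])
    fix c assume c: "c \<in> RS f t"
    show "l + e \<le> c"
    proof (rule ccontr)
      assume "\<not> l + e \<le> c"
      then have "dd f (l+e) \<le> dd f c" using g by (intro d_anti) (auto simp: good_def)
      then show False using c e unfolding RS_def by auto
    qed
  qed
  then show "l < rearr f t" using e by simp
next
  assume "l < rearr f t"
  show "ennreal t < dd f l"
  proof (rule ccontr)
    assume "\<not> ?thesis"
    then have "l \<in> RS f t" using l unfolding RS_def by auto
    then have "rearr f t \<le> l" unfolding rearr_def' by (intro cInf_lower RS_bdd)
    then show False using \<open>l < rearr f t\<close> by simp
  qed
qed


end

context orlM begin
definition "uu f t = (if 0 < t then rearr f t else 0)"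
definition "tr f s t = (if 0 < t \<and> t < s then rearr f t else 0)"

lemma uu_meas: assumes g: "good f" shows "uu f \<in> borel_measurable lebesgue"
proof -
  have "(\<lambda>t. - uu f t) \<in> borel_measurable borel"
  proof (rule borel_measurable_piecewise_mono[of "{{..0}, {0<..}}"])
    fix c assume "c \<in> {{..0::real}, {0<..}}"
    then show "mono_on c (\<lambda>t. - uu f t)"
      by (auto simp: mono_on_def uu_def intro: rearr_anti[OF g])
  qed auto
  then have "(\<lambda>t. - (- uu f t)) \<in> borel_measurable borel" by measurable
  then have "uu f \<in> borel_measurable lborel" by simp
  then show ?thesis by (rule measurable_completion)
qed

lemma tr_meas: assumes g: "good f" shows "tr f s \<in> borel_measurable lebesgue"
proof -
  have "(\<lambda>t. - tr f s t) \<in> borel_measurable borel"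
  proof (rule borel_measurable_piecewise_mono[of "{{..0}, {0<..<s}, {s..}}"])
    fix c assume "c \<in> {{..0::real}, {0<..<s}, {s..}}"
    then show "mono_on c (\<lambda>t. - tr f s t)"
      by (auto simp: mono_on_def tr_def intro: rearr_anti[OF g])
  qed auto
  then have "(\<lambda>t. - (- tr f s t)) \<in> borel_measurable borel" by measurable
  then have "tr f s \<in> borel_measurable lborel" by simp
  then show ?thesis by (rule measurable_completion)
qed

lemma uu_nn: "good f \<Longrightarrow> 0 \<le> uu f t" unfolding uu_def using rearr_nn by auto
lemma tr_nn: "good f \<Longrightarrow> 0 \<le> tr f s t" unfolding tr_def using rearr_nn by auto

lemma uu_dist: assumes g: "good f" and l: "l > 0"
  shows "emeasure lebesgue {x\<in>{0<..}. l < \<bar>uu f x\<bar>} = dd f l"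
proof -
  define r where "r = enn2real (dd f l)"
  have r: "dd f l = ennreal r" "r \<ge> 0" using dfin[OF g l] unfolding r_def by (auto simp: less_top)
  have "{x\<in>{0<..}. l < \<bar>uu f x\<bar>} = {0<..<r}"
  proof (auto simp: uu_def)
    fix x :: real assume x: "0 < x" "l < \<bar>rearr f x\<bar>"
    then have "l < rearr f x" using rearr_nn[OF g x(1)] by simp
    then have "ennreal x < ennreal r" using rearr_gt[OF g l x(1)] r by simp
    then show "x < r" using r x(1) by (simp add: ennreal_less_iff)
  next
    fix x :: real assume x: "0 < x" "x < r"
    then have "ennreal x < dd f l" using r by (simp add: ennreal_less_iff)
    then have "l < rearr f x" using rearr_gt[OF g l x(1)] by simp
    then show "l < \<bar>rearr f x\<bar>" by simp
  qed
  then show ?thesis using r by simp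
qed

lemma rho_uu: assumes g: "good f" and c: "c > 0" shows "rho c (uu f) = rho c f"
proof (rule equi[OF uu_meas[OF g] _ c])
  show "f \<in> borel_measurable lebesgue" using g by (simp add: good_def)
  fix l :: real assume "l > 0"
  then show "emeasure lebesgue {x\<in>{0<..}. l < \<bar>uu f x\<bar>} = emeasure lebesgue {x\<in>{0<..}. l < \<bar>f x\<bar>}"
    using uu_dist[OF g] unfolding distrib_fun_def by simp
qed

lemma rho_tr_le: assumes g: "good f" and c: "c > 0" shows "rho c (tr f s) \<le> rho c f"
proof -
  have "rho c (tr f s) \<le> rho c (uu f)" using c by (intro rho_fun_mono) (auto simp: tr_def uu_def)
  then show ?thesis using rho_uu[OF g c] by simp
qed

lemma good_tr: assumes g: "good f" shows "good (tr f s)"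
  using tr_meas[OF g] rho_tr_le[OF g] g unfolding good_def by (meson le_less_trans)

lemma rho_trunc: "rho c (rearr_trunc f s) = rho c (tr f s)"
  by (intro rho_cong) (auto simp: rearr_trunc_def tr_def)

lemma N_trunc: "NN (rearr_trunc f s) = NN (tr f s)"
  using rho_trunc by (intro N_cong) auto


lemma psi_deriv: assumes x: "x > 0" and e: "e > 0"
  shows "((\<lambda>x. M (e*x) - K * M x) has_real_derivative (deriv M (e*x) * e - K * deriv M x)) (at x)"
proof -
  have 1: "((\<lambda>x. M (e*x)) has_real_derivative deriv M (e*x) * e) (at x)"
  proof (rule DERIV_chain2[of M])
    show "(M has_real_derivative deriv M (e*x)) (at (e*x))" using Mder x e by simp
    show "((\<lambda>x. e*x) has_real_derivative e) (at x)" by (auto intro!: derivative_eq_intros)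
  qed
  show ?thesis by (intro DERIV_diff 1 DERIV_cmult Mder x)
qed

lemma psi_sign: assumes x: "x > 0" and e: "e > 0" and K: "K = e * (deriv M (e*w) / deriv M w)"
  shows "deriv M (e*x) * e - K * deriv M x = e * deriv M x * (deriv M (e*x) / deriv M x - deriv M (e*w) / deriv M w)"
proof -
  have "deriv M x > 0" using dpos x by auto
  then show ?thesis unfolding K by (simp add: field_simps)
qed

lemma psi1:
  assumes ratio: "\<forall>\<epsilon>. 0 < \<epsilon> \<and> \<epsilon> < 1 \<longrightarrow>
           (\<forall>x y. 0 < x \<and> x \<le> y \<longrightarrow> deriv M (\<epsilon> * y) / deriv M y \<le> deriv M (\<epsilon> * x) / deriv M x)"
    and e: "0 < e" "e < 1" and w: "w > 0" and K: "K = e * (deriv M (e*w) / deriv M w)"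
    and ab: "w \<le> b" "b \<le> a"
  shows "M (e*a) - K * M a \<le> M (e*b) - K * M b"
proof (rule DERIV_nonpos_imp_decreasing_open[OF ab(2)])
  fix x assume x: "b < x" "x < a"
  then have x0: "x > 0" using w ab by auto
  have "deriv M (e*x) / deriv M x \<le> deriv M (e*w) / deriv M w" using ratio e w ab x by auto
  moreover have "deriv M x > 0" using dpos x0 by auto
  ultimately have "deriv M (e*x) * e - K * deriv M x \<le> 0"
    unfolding psi_sign[OF x0 e(1) K] using e by (intro mult_nonneg_nonpos) auto
  then show "\<exists>y. ((\<lambda>x. M (e*x) - K * M x) has_real_derivative y) (at x) \<and> y \<le> 0"
    using psi_deriv[OF x0 e(1)] by blast
next
  show "continuous_on {b..a} (\<lambda>x. M (e*x) - K * M x)"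
  proof (rule continuous_at_imp_continuous_on, intro ballI)
    fix x assume "x \<in> {b..a}"
    then have x0: "x > 0" using w ab by auto
    show "isCont (\<lambda>x. M (e*x) - K * M x) x" by (rule DERIV_isCont[OF psi_deriv[OF x0 e(1)]])
  qed
qed

lemma psi2:
  assumes ratio: "\<forall>\<epsilon>. 0 < \<epsilon> \<and> \<epsilon> < 1 \<longrightarrow>
           (\<forall>x y. 0 < x \<and> x \<le> y \<longrightarrow> deriv M (\<epsilon> * y) / deriv M y \<le> deriv M (\<epsilon> * x) / deriv M x)"
    and e: "0 < e" "e < 1" and w: "w > 0" and K: "K = e * (deriv M (e*w) / deriv M w)"
    and ab: "0 \<le> a" "a \<le> b" "b \<le> w"
  shows "M (e*a) - K * M a \<le> M (e*b) - K * M b"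
proof (rule DERIV_nonneg_imp_increasing_open[OF ab(2)])
  fix x assume x: "a < x" "x < b"
  then have x0: "x > 0" using ab by auto
  have "deriv M (e*w) / deriv M w \<le> deriv M (e*x) / deriv M x" using ratio e w ab x x0 by auto
  moreover have "deriv M x > 0" using dpos x0 by auto
  ultimately have "0 \<le> deriv M (e*x) * e - K * deriv M x"
    unfolding psi_sign[OF x0 e(1) K] using e by (intro mult_nonneg_nonneg) auto
  then show "\<exists>y. ((\<lambda>x. M (e*x) - K * M x) has_real_derivative y) (at x) \<and> 0 \<le> y"
    using psi_deriv[OF x0 e(1)] by blast
next
  have c1: "continuous_on {a..b} (\<lambda>x. M (e*x))"
    by (rule continuous_on_compose2[OF Mcont]) (use ab e in \<open>auto intro!: continuous_intros\<close>)
  have c2: "continuous_on {a..b} M" by (rule continuous_on_subset[OF Mcont]) (use ab in auto)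
  show "continuous_on {a..b} (\<lambda>x. M (e*x) - K * M x)"
    by (intro continuous_on_diff c1 continuous_on_mult continuous_on_const c2)
qed


lemma main_ineq:
  assumes ratio: "\<forall>\<epsilon>. 0 < \<epsilon> \<and> \<epsilon> < 1 \<longrightarrow>
           (\<forall>x y. 0 < x \<and> x \<le> y \<longrightarrow> deriv M (\<epsilon> * y) / deriv M y \<le> deriv M (\<epsilon> * x) / deriv M x)"
    and gf: "good f" and gg: "good g" and t0: "t0 > 0"
    and NP: "\<And>t. t > 0 \<Longrightarrow> t \<le> t0 \<Longrightarrow> rearr g t \<le> rearr f t"
            "\<And>t. t > 0 \<Longrightarrow> t0 \<le> t \<Longrightarrow> rearr f t \<le> rearr g t"
    and wpos: "rearr g t0 > 0" and s: "t0 < s"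
    and c: "0 < c1" "c1 < c2"
    and P: "rho c1 (tr f s) \<le> 1" and Q: "1 < rho c1 (tr g s)"
  shows "rho c2 f < rho c2 g"
proof -
  define w where "w = rearr g t0"
  have wf: "rearr f t0 = w" using NP[OF t0] t0 unfolding w_def by (meson order_antisym order_refl)
  define e where "e = c1 / c2"
  have e: "0 < e" "e < 1" using c unfolding e_def by auto
  define W where "W = w / c1"
  have W: "W > 0" using wpos c unfolding W_def w_def by auto
  define K where "K = e * (deriv M (e*W) / deriv M W)"
  have Kpos: "K > 0" unfolding K_def using e W dpos by (auto intro!: mult_pos_pos divide_pos_pos)
  have c2: "c2 > 0" using c by auto
  have pw: "M (uu f t / c2) + K * M (\<bar>tr g s t\<bar> / c1) \<le> M (uu g t / c2) + K * M (\<bar>tr f s t\<bar> / c1)"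
    if t: "t > 0" for t
  proof (cases "t < s")
    case True
    define a where "a = rearr f t / c1"
    define b where "b = rearr g t / c1"
    have ua: "uu f t / c2 = e * a" "uu g t / c2 = e * b" "\<bar>tr f s t\<bar> / c1 = a" "\<bar>tr g s t\<bar> / c1 = b"
      using t True c rearr_nn[OF gf t] rearr_nn[OF gg t]
      unfolding a_def b_def e_def uu_def tr_def by (auto simp: field_simps)
    have ineq: "M (e*a) - K * M a \<le> M (e*b) - K * M b"
    proof (cases "t \<le> t0")
      case True
      have "w \<le> rearr g t" unfolding w_def using True t by (intro rearr_anti[OF gg])
      then have "W \<le> b" unfolding W_def b_def using c by (simp add: divide_right_mono)
      moreover have "b \<le> a" unfolding a_def b_def using NP(1)[OF t True] c by (simp add: divide_right_mono)
      ultimately show ?thesis by (rule psi1[OF ratio e W K_def])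
    next
      case False
      have "rearr g t \<le> w" unfolding w_def using False t t0 by (intro rearr_anti[OF gg]) auto
      then have "b \<le> W" unfolding W_def b_def using c by (simp add: divide_right_mono)
      moreover have "a \<le> b" unfolding a_def b_def using NP(2)[OF t] False c by (simp add: divide_right_mono)
      moreover have "0 \<le> a" unfolding a_def using rearr_nn[OF gf t] c by simp
      ultimately show ?thesis using psi2[OF ratio e W K_def] by blast
    qed
    then show ?thesis unfolding ua by simp
  next
    case False
    then have "tr f s t = 0" "tr g s t = 0" unfolding tr_def by auto
    moreover have "uu f t \<le> uu g t" using NP(2)[OF t] False s t unfolding uu_def by auto
    then have "M (uu f t / c2) \<le> M (uu g t / c2)"
      using uu_nn[OF gf] c2 by (intro Mle divide_right_mono) auto
    ultimately show ?thesis using M0 by simp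
  qed
  let ?ind = "indicator {0<..} :: real \<Rightarrow> ennreal"
  have pwe: "ennreal (M (\<bar>uu f x\<bar> / c2)) * ?ind x + ennreal K * (ennreal (M (\<bar>tr g s x\<bar> / c1)) * ?ind x)
      \<le> ennreal (M (\<bar>uu g x\<bar> / c2)) * ?ind x + ennreal K * (ennreal (M (\<bar>tr f s x\<bar> / c1)) * ?ind x)" for x
  proof (cases "x > 0")
    case True
    have nn: "0 \<le> M (uu f x / c2)" "0 \<le> M (uu g x / c2)" "0 \<le> M (\<bar>tr g s x\<bar> / c1)" "0 \<le> M (\<bar>tr f s x\<bar> / c1)"
      using uu_nn[OF gf] uu_nn[OF gg] c2 c by (auto intro!: Mnn)
    have "ennreal (M (uu f x / c2) + K * M (\<bar>tr g s x\<bar> / c1)) \<le> ennreal (M (uu g x / c2) + K * M (\<bar>tr f s x\<bar> / c1))"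
      using pw[OF True] by (rule ennreal_leI)
    then show ?thesis using True nn Kpos uu_nn[OF gf, of x] uu_nn[OF gg, of x]
      by (simp add: ennreal_plus[symmetric] ennreal_mult[symmetric] del: ennreal_plus)
  qed simp
  have mf: "uu f \<in> borel_measurable lebesgue" "uu g \<in> borel_measurable lebesgue"
    "tr f s \<in> borel_measurable lebesgue" "tr g s \<in> borel_measurable lebesgue"
    using uu_meas[OF gf] uu_meas[OF gg] tr_meas[OF gf] tr_meas[OF gg] by auto
  have meas_e: "(\<lambda>x. ennreal (M (\<bar>h x\<bar> / c)) * ?ind x) \<in> borel_measurable lebesgue"
    if "h \<in> borel_measurable lebesgue" "c > 0" for h c using integrand_meas[OF that] .
  have split: "(\<integral>\<^sup>+x. ennreal (M (\<bar>h1 x\<bar> / a)) * ?ind x + ennreal K * (ennreal (M (\<bar>h2 x\<bar> / b)) * ?ind x) \<partial>lebesgue)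
     = rho a h1 + ennreal K * rho b h2"
    if "h1 \<in> borel_measurable lebesgue" "h2 \<in> borel_measurable lebesgue" "a > 0" "b > 0" for h1 h2 a b
  proof -
    have I1: "(\<integral>\<^sup>+x. ennreal (M (\<bar>h1 x\<bar> / a)) * ?ind x + ennreal K * (ennreal (M (\<bar>h2 x\<bar> / b)) * ?ind x) \<partial>lebesgue)
      = (\<integral>\<^sup>+x. ennreal (M (\<bar>h1 x\<bar> / a)) * ?ind x \<partial>lebesgue) + (\<integral>\<^sup>+x. ennreal K * (ennreal (M (\<bar>h2 x\<bar> / b)) * ?ind x) \<partial>lebesgue)"
      by (rule nn_integral_add) (use meas_e that in auto)
    have I2: "(\<integral>\<^sup>+x. ennreal K * (ennreal (M (\<bar>h2 x\<bar> / b)) * ?ind x) \<partial>lebesgue) = ennreal K * (\<integral>\<^sup>+x. ennreal (M (\<bar>h2 x\<bar> / b)) * ?ind x \<partial>lebesgue)"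
      by (rule nn_integral_cmult) (use meas_e that in auto)
    show ?thesis unfolding I1 I2 orlicz_modular_def ..
  qed
  have "rho c2 (uu f) + ennreal K * rho c1 (tr g s) =
      (\<integral>\<^sup>+x. ennreal (M (\<bar>uu f x\<bar> / c2)) * ?ind x + ennreal K * (ennreal (M (\<bar>tr g s x\<bar> / c1)) * ?ind x) \<partial>lebesgue)"
    using split[OF mf(1) mf(4) c2 c(1)] by simp
  also have "\<dots> \<le> (\<integral>\<^sup>+x. ennreal (M (\<bar>uu g x\<bar> / c2)) * ?ind x + ennreal K * (ennreal (M (\<bar>tr f s x\<bar> / c1)) * ?ind x) \<partial>lebesgue)"
    by (intro nn_integral_mono pwe)
  also have "\<dots> = rho c2 (uu g) + ennreal K * rho c1 (tr f s)"
    using split[OF mf(2) mf(3) c2 c(1)] by simp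
  finally have main: "rho c2 f + ennreal K * rho c1 (tr g s) \<le> rho c2 g + ennreal K * rho c1 (tr f s)"
    using rho_uu[OF gf c2] rho_uu[OF gg c2] by simp
  have fin: "rho c2 g < \<infinity>" "rho c1 (tr g s) < \<infinity>" using gg good_tr[OF gg] c c2 by (auto simp: good_def)
  show ?thesis by (rule ennreal_cancel[OF main P Q fin Kpos])
qed

end

theorem mainTheorem17:
  fixes M :: "real \<Rightarrow> real"
  assumes "orlicz_function M"
    and "delta2 M"
    and "\<forall>x>0. M differentiable (at x)"
    and "\<forall>x>0. deriv M x > 0"
    and "\<forall>\<epsilon>. 0 < \<epsilon> \<and> \<epsilon> < 1 \<longrightarrow>
           (\<forall>x y. 0 < x \<and> x \<le> y \<longrightarrow> deriv M (\<epsilon> * y) / deriv M y \<le> deriv M (\<epsilon> * x) / deriv M x)"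
  shows "class_X (orlicz_space M) (luxemburg_norm M)"
proof -
  interpret orlM M using assms(1-4) by unfold_locales
  note ratio = assms(5)
  show ?thesis unfolding class_X_def
  proof (intro allI impI)
    fix f g :: "real \<Rightarrow> real" and s :: real
    assume H: "f \<in> orlicz_space M \<and> g \<in> orlicz_space M \<and> NP_condition f g \<and> NN g \<le> NN f"
      and s: "s > 0"
    have gf: "good f" and gg: "good g" using H space_good by auto
    obtain t0 where t0: "t0 > 0" and NPt: "\<forall>t>0. (t \<le> t0 \<longrightarrow> rearr g t \<le> rearr f t) \<and> (t \<ge> t0 \<longrightarrow> rearr f t \<le> rearr g t)"
      using H unfolding NP_condition_def by blast
    have NP1: "\<And>t. t > 0 \<Longrightarrow> t \<le> t0 \<Longrightarrow> rearr g t \<le> rearr f t" using NPt by blast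
    have NP2: "\<And>t. t > 0 \<Longrightarrow> t0 \<le> t \<Longrightarrow> rearr f t \<le> rearr g t" using NPt by blast
    have gtf: "good (tr f s)" and gtg: "good (tr g s)" using good_tr gf gg by auto
    have eqf: "NN (rearr_trunc f s) = NN (tr f s)" by (rule N_trunc)
    have eqg: "NN (rearr_trunc g s) = NN (tr g s)" by (rule N_trunc)
    have "NN (tr g s) \<le> NN (tr f s)"
    proof (cases "\<forall>t. 0 < t \<and> t < s \<longrightarrow> rearr g t \<le> rearr f t")
      case True
      show ?thesis
      proof (rule N_mono[OF gtg gtf])
        fix c :: real assume "c > 0"
        then show "rho c (tr g s) \<le> rho c (tr f s)"
        proof (rule rho_fun_mono)
          fix x :: real assume x: "x > 0"
          show "\<bar>tr g s x\<bar> \<le> \<bar>tr f s x\<bar>"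
          proof (cases "x < s")
            case xs: True
            have "0 \<le> rearr g x" "rearr g x \<le> rearr f x" using rearr_nn[OF gg x] True x xs by auto
            then show ?thesis using x xs by (simp add: tr_def)
          qed (simp add: tr_def)
        qed
      qed
    next
      case False
      then obtain t1 where t1: "0 < t1" "t1 < s" "rearr f t1 < rearr g t1" by auto
      have t01: "t0 < t1" using NP1[OF t1(1)] t1(3) by force
      have "rearr g t1 \<le> rearr g t0" using t0 t01 by (intro rearr_anti[OF gg]) auto
      moreover have "0 \<le> rearr f t1" using rearr_nn[OF gf t1(1)] .
      ultimately have wpos: "rearr g t0 > 0" using t1(3) by linarith
      have s0: "t0 < s" using t01 t1(2) by linarith
      show ?thesis
      proof (rule ccontr)
        assume "\<not> NN (tr g s) \<le> NN (tr f s)"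
        then have lt: "NN (tr f s) < NN (tr g s)" by simp
        define c1 where "c1 = (NN (tr f s) + NN (tr g s)) / 2"
        have c1: "NN (tr f s) < c1" "c1 < NN (tr g s)" using lt unfolding c1_def by auto
        have c1pos: "0 < c1" using N_nonneg[OF gtf] c1(1) by linarith
        have P: "rho c1 (tr f s) \<le> 1" by (rule N_gt[OF gtf c1(1)])
        have Q: "1 < rho c1 (tr g s)" by (rule N_lt[OF c1pos c1(2)])
        have "NN (tr g s) \<le> NN g" by (rule N_mono[OF gtg gg]) (rule rho_tr_le[OF gg])
        then have n: "c1 < NN g" using c1(2) by linarith
        then have npos: "0 < NN g" using c1pos by linarith
        have "rho (NN g) f < rho (NN g) g"
          by (rule main_ineq[OF ratio gf gg t0 NP1 NP2 wpos s0 c1pos n P Q])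
        also have "\<dots> \<le> 1" by (rule N_at[OF gg npos])
        finally have "NN f < NN g" by (rule N_left[OF gf npos])
        then show False using H by simp
      qed
    qed
    then show "NN (rearr_trunc g s) \<le> NN (rearr_trunc f s)" using eqf eqg by simp
  qed
qed

end
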